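(* For a coloured integer $k_x$, let $G_{k_x}(a,b,q)=\sum a^{u}b^{v}q^{n}$, the sum running over all admissible coloured partitions (including the empty one) whose largest part $\lambda_1$ satisfies $\lambda_1\le k_x$ in the total order of coloured integers, where $n,u,v$ are the size and the two weights of the partition. Writing $G_{k_x}$ for $G_{k_x}(a,b,q)$, for all integers $k\ge 1$ the following identities of formal power series hold: \begin{align*} G_{(2k+1)_{ab}}&=G_{(2k)_{b}}+abq^{2k+1} G_{(2k-1)_{a}},\\ G_{(2k+1)_a}&=G_{(2k+1)_{ab}}+aq^{2k+1} G_{(2k)_{ab}},\\ G_{(2k+1)_{b^2}}&=G_{(2k+1)_{a}}+b^2q^{2k+1}G_{(2k-1)_{a}},\\ G_{(2k+1)_{b}}&=G_{(2k+1)_{b^2}}+bq^{2k+1}G_{(2k)_{a}},\\ G_{(2k+2)_{ab}}&= G_{(2k+1)_{b}}+abq^{2k+2}G_{(2k)_{a}}+ab^2q^{4k+2}G_{(2k-1)_{a}},\\ G_{(2k+2)_{a}}&= G_{(2k+2)_{ab}}+ aq^{2k+2} G_{(2k)_{a}}+ abq^{4k+2}G_{(2k-1)_{a}},\\ G_{(2k+3)_{a^2}}&=G_{(2k+2)_{a}}+a^2q^{2k+3}G_{(2k)_{a}}+a^2bq^{4k+3}G_{(2k-1)_{a}},\\ G_{(2k+2)_{b}}&=G_{(2k+3)_{a^2}}+bq^{2k+2}G_{(2k+1)_{a}}. \end{align*}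
   Context: Coloured integers: every positive integer $k$ occurs in the three colours $a$, $b$, $ab$ (written $k_a$, $k_b$, $k_{ab}$). In addition, odd positive integers occur in the colours $a^2$ and $b^2$: $k_{b^2}$ for every odd $k\ge 1$ and $k_{a^2}$ for every odd $k \geq 3$. The integer value of $k_x$ is $k$ and its colour is $x$. These coloured integers are totally ordered by $$1_{ab} < 1_a < 1_{b^2} <1_{b} <2_{ab} < 2_a <3_{a^2} < 2_{b} <3_{ab} < 3_a < 3_{b^2} <3_b <4_{ab}<4_a<5_{a^2}<4_b<5_{ab}<\cdots,$$ that is, for every odd $m\ge1$: $m_{ab}<m_a<m_{b^2}<m_b<(m+1)_{ab}<(m+1)_a<(m+2)_{a^2}<(m+1)_b<(m+2)_{ab}$. Difference conditions: for a coloured integer $\lambda$ (the "upper" part) of colour $x$ and a coloured integer $\mu$ (the "lower" part) of colour $y$, a minimal difference $A(\lambda,\mu)$ is defined as follows, where the row is determined by the colour and the parity of the integer value of $\lambda$, and the entries are listed for $y = a, b, ab, a^2, b^2$ in this order: - $\lambda$ of colour $a$, odd: $2,2,1,2,2$; - $\lambda$ of colour $b^2$: $2,3,2,2,4$; - $\lambda$ of colour $b$, odd: $1,2,1,2,2$; - $\lambda$ of colour $ab$, even: $2,2,2,3,3$; - $\lambda$ of colour $a$, even: $2,2,2,3,3$; - $\lambda$ of colour $a^2$: $3,3,3,4,4$; - $\lambda$ of colour $b$, even: $1,2,1,1,3$; - $\lambda$ of colour $ab$, odd: $2,3,2,2,3$. An admissible coloured partition is a finite (possibly empty) sequence $\lambda_1,\dots,\lambda_s$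 of coloured integers, none of which equals $1_{ab}$ or $1_{b^2}$, such that for every $1\le i<s$ the integer values satisfy $\lambda_i-\lambda_{i+1}\ge A(\lambda_i,\lambda_{i+1})$. Its size $n$ is the sum of the integer values of its parts. Its weight $u$ is the number of parts of colour $a$ or $ab$ plus twice the number of parts of colour $a^2$; its weight $v$ is the number of parts of colour $b$ or $ab$ plus twice the number of parts of colour $b^2$. *)

theory Defs
  imports "HOL-Computational_Algebra.Formal_Power_Series"
begin

datatype colour = Ca | Cb | Cab | Ca2 | Cb2

type_synonym cint = "nat \<times> colour"

definition valid_cint :: "cint \<Rightarrow> bool" where
  "valid_cint c = (case c of (k, x) \<Rightarrow> k \<ge> 1 \<and>
     (case x of Ca \<Rightarrow> True | Cb \<Rightarrow> True | Cab \<Rightarrow> True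
              | Ca2 \<Rightarrow> odd k \<and> k \<ge> 3 | Cb2 \<Rightarrow> odd k))"

text \<open>Position in the total order
  1_ab < 1_a < 1_b2 < 1_b < 2_ab < 2_a < 3_a2 < 2_b < 3_ab < ... (meaningful on valid ones).\<close>
fun rank :: "cint \<Rightarrow> nat" where
  "rank (k, Cab) = (if odd k then 8 * ((k - 1) div 2) else 8 * ((k - 2) div 2) + 4)"
| "rank (k, Ca) = (if odd k then 8 * ((k - 1) div 2) + 1 else 8 * ((k - 2) div 2) + 5)"
| "rank (k, Cb2) = 8 * ((k - 1) div 2) + 2"
| "rank (k, Cb) = (if odd k then 8 * ((k - 1) div 2) + 3 else 8 * ((k - 2) div 2) + 7)"
| "rank (k, Ca2) = 8 * ((k - 3) div 2) + 6"

definition cle :: "cint \<Rightarrow> cint \<Rightarrow> bool" where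
  "cle c d = (rank c \<le> rank d)"

fun row :: "colour \<Rightarrow> nat \<Rightarrow> nat \<Rightarrow> nat \<Rightarrow> nat \<Rightarrow> nat \<Rightarrow> nat" where
  "row Ca  ea eb eab ea2 eb2 = ea"
| "row Cb  ea eb eab ea2 eb2 = eb"
| "row Cab ea eb eab ea2 eb2 = eab"
| "row Ca2 ea eb eab ea2 eb2 = ea2"
| "row Cb2 ea eb eab ea2 eb2 = eb2"

fun mindiff :: "cint \<Rightarrow> cint \<Rightarrow> nat" where
  "mindiff (k, Ca) (_, y) = (if odd k then row y 2 2 1 2 2 else row y 2 2 2 3 3)"
| "mindiff (k, Cb2) (_, y) = row y 2 3 2 2 4"
| "mindiff (k, Cb) (_, y) = (if odd k then row y 1 2 1 2 2 else row y 1 2 1 1 3)"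
| "mindiff (k, Cab) (_, y) = (if odd k then row y 2 3 2 2 3 else row y 2 2 2 3 3)"
| "mindiff (k, Ca2) (_, y) = row y 3 3 3 4 4"

definition admissible :: "cint list \<Rightarrow> bool" where
  "admissible p = ((\<forall>c \<in> set p. valid_cint c \<and> c \<noteq> (1, Cab) \<and> c \<noteq> (1, Cb2)) \<and>
     (\<forall>i. Suc i < length p \<longrightarrow>
        fst (p ! Suc i) + mindiff (p ! i) (p ! Suc i) \<le> fst (p ! i)))"

definition psize :: "cint list \<Rightarrow> nat" where
  "psize p = (\<Sum>c\<leftarrow>p. fst c)"

definition weight_u :: "cint list \<Rightarrow> nat" where
  "weight_u p = length (filter (\<lambda>c. snd c = Ca \<or> snd c = Cab) p)
               + 2 * length (filter (\<lambda>c. snd c = Ca2) p)"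

definition weight_v :: "cint list \<Rightarrow> nat" where
  "weight_v p = length (filter (\<lambda>c. snd c = Cb \<or> snd c = Cab) p)
               + 2 * length (filter (\<lambda>c. snd c = Cb2) p)"

definition parts_bounded :: "cint \<Rightarrow> nat \<Rightarrow> nat \<Rightarrow> nat \<Rightarrow> cint list set" where
  "parts_bounded kx n u v = {p. admissible p \<and> (p = [] \<or> cle (hd p) kx) \<and>
      psize p = n \<and> weight_u p = u \<and> weight_v p = v}"

text \<open>Formal power series in a, b, q as nested fps: outer variable q,
  middle variable b, inner variable a.\<close>
definition G :: "cint \<Rightarrow> int fps fps fps" where
  "G kx = Abs_fps (\<lambda>n. Abs_fps (\<lambda>v. Abs_fps (\<lambda>u. int (card (parts_bounded kx n u v)))))"

definition varq :: "int fps fps fps" where "varq = fps_X"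
definition varb :: "int fps fps fps" where "varb = fps_const fps_X"
definition vara :: "int fps fps fps" where "vara = fps_const (fps_const fps_X)"

end

theory Submission imports Defs begin


lemma colour_UNIV: "(UNIV :: colour set) = {Ca,Cb,Cab,Ca2,Cb2}"
  by (rule UNIV_eq_I, case_tac x) auto

lemma odd_form: "odd (k::nat) \<Longrightarrow> \<exists>m. k = 2*m+1" by (metis oddE)
lemma even_form: "even (k::nat) \<Longrightarrow> k \<ge> 1 \<Longrightarrow> \<exists>m. k = 2*m+2"
proof -
  assume "even k" "k \<ge> 1"
  then obtain m where "k = 2*m" by (auto elim: evenE)
  with \<open>k \<ge> 1\<close> have "k = 2*(m-1)+2" by simp
  then show ?thesis by blast
qed
lemma rank_Cab: assumes "k \<ge> 1" shows "rank (k,Cab) = 4*k-4"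
proof (cases "odd k")
  case True then obtain m where "k = 2*m+1" using odd_form by blast
  then show ?thesis by simp
next
  case False then obtain m where "k = 2*m+2" using even_form assms by blast
  then show ?thesis by simp
qed
lemma rank_Ca: assumes "k \<ge> 1" shows "rank (k,Ca) = 4*k-3"
proof (cases "odd k")
  case True then obtain m where "k = 2*m+1" using odd_form by blast
  then show ?thesis by simp
next
  case False then obtain m where "k = 2*m+2" using even_form assms by blast
  then show ?thesis by simp
qed
lemma rank_Cb: assumes "k \<ge> 1" shows "rank (k,Cb) = 4*k-1"
proof (cases "odd k")
  case True then obtain m where "k = 2*m+1" using odd_form by blast
  then show ?thesis by simp
next
  case False then obtain m where "k = 2*m+2" using even_form assms by blast
  then show ?thesis by simp
qed
lemma rank_Cb2: assumes "odd k" shows "rank (k,Cb2) = 4*k-2"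
proof -
  obtain m where "k = 2*m+1" using odd_form assms by blast
  then show ?thesis by simp
qed
lemma rank_Ca2: assumes "odd k" "k \<ge> 3" shows "rank (k,Ca2) = 4*k-6"
proof -
  obtain m where "k = 2*m+1" using odd_form assms by blast
  with assms have "k = 2*(m-1)+3" by simp
  then obtain n where "k = 2*n+3" by blast
  then show ?thesis by simp
qed
lemmas rank_simps = rank_Cab rank_Ca rank_Cb rank_Cb2 rank_Ca2
lemma rank_inj_aux: "valid_cint (j,y) \<Longrightarrow> valid_cint (k, x) \<Longrightarrow> rank (j,y) = rank (k,x) \<Longrightarrow> (j,y) = (k,x)"
  apply (cases y; cases x; simp add: valid_cint_def rank_simps del: rank.simps)
  apply (arith | presburger)+ done

lemma rank_inj:
  assumes "valid_cint h" "valid_cint c" "rank h = rank c" shows "h = c"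
  using rank_inj_aux[of "fst h" "snd h" "fst c" "snd c"] assms by simp

lemma psize_Cons[simp]: "psize (c # p) = fst c + psize p" by (simp add: psize_def)
definition wuc :: "cint \<Rightarrow> nat" where "wuc c = weight_u [c]"
definition wvc :: "cint \<Rightarrow> nat" where "wvc c = weight_v [c]"
lemma wu_Cons: "weight_u (c # p) = wuc c + weight_u p" by (simp add: weight_u_def wuc_def)
lemma wv_Cons: "weight_v (c # p) = wvc c + weight_v p" by (simp add: weight_v_def wvc_def)

lemma adm_Cons: "admissible (c # p) \<longleftrightarrow> (valid_cint c \<and> c \<noteq> (1,Cab) \<and> c \<noteq> (1,Cb2)) \<and> admissible p \<and>
   (p = [] \<or> fst (hd p) + mindiff c (hd p) \<le> fst c)"
proof (cases p)
  case Nil then show ?thesis by (simp add: admissible_def)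
next
  case (Cons d q)
  have "(\<forall>i. Suc i < length (c#p) \<longrightarrow> fst ((c#p) ! Suc i) + mindiff ((c#p) ! i) ((c#p) ! Suc i) \<le> fst ((c#p) ! i))
     \<longleftrightarrow> fst d + mindiff c d \<le> fst c \<and> (\<forall>i. Suc i < length p \<longrightarrow> fst (p ! Suc i) + mindiff (p ! i) (p ! Suc i) \<le> fst (p ! i))"
    (is "?L \<longleftrightarrow> ?R")
  proof
    assume L: ?L
    have "fst d + mindiff c d \<le> fst c" using L[rule_format, of 0] Cons by simp
    moreover have "\<forall>i. Suc i < length p \<longrightarrow> fst (p ! Suc i) + mindiff (p ! i) (p ! Suc i) \<le> fst (p ! i)"
      using L[rule_format, of "Suc i" for i] by simp
    ultimately show ?R by simp
  next
    assume R: ?R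
    show ?L
    proof (intro allI impI)
      fix i assume "Suc i < length (c#p)"
      then show "fst ((c#p) ! Suc i) + mindiff ((c#p) ! i) ((c#p) ! Suc i) \<le> fst ((c#p) ! i)"
        using R Cons by (cases i) auto
    qed
  qed
  then show ?thesis using Cons unfolding admissible_def by auto
qed

definition PS :: "cint list set \<Rightarrow> nat \<Rightarrow> nat \<Rightarrow> nat \<Rightarrow> cint list set" where
  "PS S n u v = {p \<in> S. psize p = n \<and> weight_u p = u \<and> weight_v p = v}"

definition GF :: "cint list set \<Rightarrow> int fps fps fps" where
  "GF S = Abs_fps (\<lambda>n. Abs_fps (\<lambda>v. Abs_fps (\<lambda>u. int (card (PS S n u v)))))"

definition Bd :: "cint \<Rightarrow> cint list set" where
  "Bd kx = {p. admissible p \<and> (p = [] \<or> cle (hd p) kx)}"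

definition TT :: "cint \<Rightarrow> cint list set" where
  "TT c = {p. admissible (c # p)}"

lemma G_GF: "G kx = GF (Bd kx)"
  unfolding G_def GF_def PS_def Bd_def parts_bounded_def by simp

lemma len_le: "\<forall>c\<in>set p. 1 \<le> fst c \<Longrightarrow> length p \<le> psize p"
  by (induction p) auto

lemma mem_le: "c \<in> set p \<Longrightarrow> fst c \<le> psize p"
  by (induction p) auto

lemma fin_PS: assumes "S \<subseteq> Collect admissible" shows "finite (PS S n u v)"
proof -
  have "PS S n u v \<subseteq> {p. set p \<subseteq> {1..n} \<times> UNIV \<and> length p \<le> n}"
  proof
    fix p assume p: "p \<in> PS S n u v"
    then have a: "admissible p" and s: "psize p = n" using assms unfolding PS_def by auto
    have v: "\<forall>c\<in>set p. 1 \<le> fst c" using a unfolding admissible_def valid_cint_def by auto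
    show "p \<in> {p. set p \<subseteq> {1..n} \<times> UNIV \<and> length p \<le> n}"
      using len_le[OF v] mem_le[of _ p] v s by force
  qed
  moreover have "finite {p. set p \<subseteq> {1..n} \<times> (UNIV::colour set) \<and> length p \<le> n}"
    by (rule finite_lists_length_le) (simp add: colour_UNIV)
  ultimately show ?thesis by (rule finite_subset)
qed

lemma GF_Un: assumes "S \<subseteq> Collect admissible" "T \<subseteq> Collect admissible" "S \<inter> T = {}"
  shows "GF (S \<union> T) = GF S + GF T"
proof -
  have "PS (S \<union> T) n u v = PS S n u v \<union> PS T n u v" for n u v unfolding PS_def by auto
  moreover have "PS S n u v \<inter> PS T n u v = {}" for n u v using assms(3) unfolding PS_def by auto
  ultimately have "card (PS (S \<union> T) n u v) = card (PS S n u v) + card (PS T n u v)" for n u v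
    by (simp add: card_Un_disjoint fin_PS assms)
  then show ?thesis unfolding GF_def
    by (intro fps_ext) simp
qed

lemma mono_nth:
  fixes F :: "int fps fps fps"
  shows "fps_nth (fps_nth (fps_nth (vara^i * varb^j * varq^m * F) N) V) U =
    (if m \<le> N \<and> j \<le> V \<and> i \<le> U then fps_nth (fps_nth (fps_nth F (N-m)) (V-j)) (U-i) else 0)"
proof -
  have e: "vara^i * varb^j * varq^m * F = fps_const (fps_const (fps_X^i) * fps_X^j) * (fps_X^m * F)"
    by (simp add: vara_def varb_def varq_def mult.assoc)
  have "fps_nth (fps_X^m * F) N = (if N < m then 0 else fps_nth F (N-m))" by (rule fps_X_power_mult_nth)
  then have 1: "fps_nth (vara^i * varb^j * varq^m * F) N = (if N < m then 0 else fps_const (fps_X^i) * (fps_X^j * fps_nth F (N-m)))"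
    unfolding e by (simp add: mult.assoc)
  show ?thesis
  proof (cases "N < m")
    case True then show ?thesis using 1 by simp
  next
    case False
    have 2: "fps_nth (fps_nth (vara^i * varb^j * varq^m * F) N) V = fps_X^i * (if V < j then 0 else fps_nth (fps_nth F (N-m)) (V-j))"
      using False 1 by (simp add: fps_X_power_mult_nth)
    show ?thesis using False 2 by (auto simp add: fps_X_power_mult_nth)
  qed
qed

lemma GF_cons: "GF ((#) c ` S) = vara^(wuc c) * varb^(wvc c) * varq^(fst c) * GF S"
proof -
  have ps: "PS ((#) c ` S) N U V = (if fst c \<le> N \<and> wvc c \<le> V \<and> wuc c \<le> U
      then (#) c ` PS S (N - fst c) (U - wuc c) (V - wvc c) else {})" for N U V
    unfolding PS_def by (auto simp: wu_Cons wv_Cons)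
  have "card (PS ((#) c ` S) N U V) = (if fst c \<le> N \<and> wvc c \<le> V \<and> wuc c \<le> U
      then card (PS S (N - fst c) (U - wuc c) (V - wvc c)) else 0)" for N U V
    unfolding ps by (simp add: card_image)
  then show ?thesis
    by (intro fps_ext) (simp add: mono_nth GF_def)
qed



lemma Bd_adm: "Bd kx \<subseteq> Collect admissible" unfolding Bd_def by auto
lemma TT_adm: "(#) c ` TT c \<subseteq> Collect admissible" unfolding TT_def by auto
lemma TT_adm2: "TT c \<subseteq> Collect admissible" unfolding TT_def using adm_Cons by auto

lemma decomp:
  assumes vc: "valid_cint c" "c \<noteq> (1,Cab)" "c \<noteq> (1,Cb2)" and r: "rank kx + 1 = rank c"
    and wu: "wuc c = i" and wv: "wvc c = j"
  shows "G c = G kx + vara^i * varb^j * varq^(fst c) * GF (TT c)"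
proof -
  have eq: "Bd c = Bd kx \<union> (#) c ` TT c"
  proof
    show "Bd c \<subseteq> Bd kx \<union> (#) c ` TT c"
    proof
      fix p assume p: "p \<in> Bd c"
      show "p \<in> Bd kx \<union> (#) c ` TT c"
      proof (cases p)
        case Nil then show ?thesis using p unfolding Bd_def by auto
      next
        case (Cons h q)
        have a: "admissible (h # q)" and rh: "rank h \<le> rank c" using p Cons unfolding Bd_def cle_def by auto
        have vh: "valid_cint h" using a adm_Cons by auto
        show ?thesis
        proof (cases "rank h \<le> rank kx")
          case True then show ?thesis using a Cons unfolding Bd_def cle_def by auto
        next
          case False
          then have "rank h = rank c" using r rh by simp
          then have "h = c" using rank_inj vh vc by blast
          then show ?thesis using a Cons unfolding TT_def by auto
        qed
      qed
    qed
  next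
    show "Bd kx \<union> (#) c ` TT c \<subseteq> Bd c"
      using r unfolding Bd_def TT_def cle_def by auto
  qed
  have disj: "Bd kx \<inter> (#) c ` TT c = {}"
    using r unfolding Bd_def TT_def cle_def by auto
  show ?thesis
    unfolding G_GF eq GF_Un[OF Bd_adm TT_adm disj] GF_cons wu wv ..
qed

lemma tail1:
  assumes H: "\<And>h. valid_cint h \<Longrightarrow> h \<noteq> (1,Cab) \<Longrightarrow> h \<noteq> (1,Cb2) \<Longrightarrow>
      (fst h + mindiff c h \<le> fst c \<longleftrightarrow> rank h \<le> rank mu)"
    and vc: "valid_cint c" "c \<noteq> (1,Cab)" "c \<noteq> (1,Cb2)"
  shows "GF (TT c) = G mu"
proof -
  have "TT c = Bd mu"
  proof (intro set_eqI)
    fix p show "p \<in> TT c \<longleftrightarrow> p \<in> Bd mu"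
    proof (cases p)
      case Nil then show ?thesis using vc unfolding TT_def Bd_def by (simp add: adm_Cons admissible_def)
    next
      case (Cons h q)
      show ?thesis
      proof (cases "admissible p")
        case True
        then have "valid_cint h" "h \<noteq> (1,Cab)" "h \<noteq> (1,Cb2)" using Cons adm_Cons by auto
        then show ?thesis using H[of h] True Cons vc unfolding TT_def Bd_def cle_def
          by (simp only: adm_Cons[of c]) auto
      next
        case False then show ?thesis unfolding TT_def Bd_def using adm_Cons[of c p] by auto
      qed
    qed
  qed
  then show ?thesis by (simp add: G_GF)
qed

lemma tail2:
  assumes H: "\<And>h. valid_cint h \<Longrightarrow> h \<noteq> (1,Cab) \<Longrightarrow> h \<noteq> (1,Cb2) \<Longrightarrow>
      (fst h + mindiff c h \<le> fst c \<longleftrightarrow> rank h \<le> rank mu \<or> h = d)"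
    and vc: "valid_cint c" "c \<noteq> (1,Cab)" "c \<noteq> (1,Cb2)"
    and rd: "rank mu < rank d"
    and wu: "wuc d = i" and wv: "wvc d = j"
  shows "GF (TT c) = G mu + vara^i * varb^j * varq^(fst d) * GF (TT d)"
proof -
  have eq: "TT c = Bd mu \<union> (#) d ` TT d"
  proof (intro set_eqI)
    fix p show "p \<in> TT c \<longleftrightarrow> p \<in> Bd mu \<union> (#) d ` TT d"
    proof (cases p)
      case Nil then show ?thesis using vc unfolding TT_def Bd_def by (simp add: adm_Cons admissible_def)
    next
      case (Cons h q)
      show ?thesis
      proof (cases "admissible p")
        case True
        then have "valid_cint h" "h \<noteq> (1,Cab)" "h \<noteq> (1,Cb2)" using Cons adm_Cons by auto
        then show ?thesis using H[of h] True Cons vc unfolding TT_def Bd_def cle_def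
          by (simp only: adm_Cons[of c]) auto
      next
        case False then show ?thesis unfolding TT_def Bd_def using adm_Cons[of c p] Cons by auto
      qed
    qed
  qed
  have disj: "Bd mu \<inter> (#) d ` TT d = {}"
    using rd unfolding Bd_def TT_def cle_def by auto
  show ?thesis
    unfolding G_GF eq GF_Un[OF Bd_adm TT_adm disj] GF_cons wu wv ..
qed



lemma ar1: "k \<ge> 1 \<Longrightarrow> valid_cint (j,y) \<Longrightarrow> (j,y) \<noteq> (1,Cab) \<Longrightarrow> (j,y) \<noteq> (1,Cb2) \<Longrightarrow>
  (fst (j,y) + mindiff (2*k+1,Cab) (j,y) \<le> fst (2*k+1,Cab) \<longleftrightarrow> rank (j,y) \<le> rank (2*k-1,Ca))"
  by (cases y; simp add: valid_cint_def rank_simps del: rank.simps; arith)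

lemma ar2: "k \<ge> 1 \<Longrightarrow> valid_cint (j,y) \<Longrightarrow> (j,y) \<noteq> (1,Cab) \<Longrightarrow> (j,y) \<noteq> (1,Cb2) \<Longrightarrow>
  (fst (j,y) + mindiff (2*k+1,Ca) (j,y) \<le> fst (2*k+1,Ca) \<longleftrightarrow> rank (j,y) \<le> rank (2*k,Cab))"
  by (cases y; simp add: valid_cint_def rank_simps del: rank.simps; arith)

lemma ar3: "k \<ge> 1 \<Longrightarrow> valid_cint (j,y) \<Longrightarrow> (j,y) \<noteq> (1,Cab) \<Longrightarrow> (j,y) \<noteq> (1,Cb2) \<Longrightarrow>
  (fst (j,y) + mindiff (2*k+1,Cb2) (j,y) \<le> fst (2*k+1,Cb2) \<longleftrightarrow> rank (j,y) \<le> rank (2*k-1,Ca))"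
  by (cases y; simp add: valid_cint_def rank_simps del: rank.simps; arith)

lemma ar4: "k \<ge> 1 \<Longrightarrow> valid_cint (j,y) \<Longrightarrow> (j,y) \<noteq> (1,Cab) \<Longrightarrow> (j,y) \<noteq> (1,Cb2) \<Longrightarrow>
  (fst (j,y) + mindiff (2*k+1,Cb) (j,y) \<le> fst (2*k+1,Cb) \<longleftrightarrow> rank (j,y) \<le> rank (2*k,Ca))"
  by (cases y; simp add: valid_cint_def rank_simps del: rank.simps; arith)

lemma ar5: "k \<ge> 1 \<Longrightarrow> valid_cint (j,y) \<Longrightarrow> (j,y) \<noteq> (1,Cab) \<Longrightarrow> (j,y) \<noteq> (1,Cb2) \<Longrightarrow>
  (fst (j,y) + mindiff (2*k+2,Cab) (j,y) \<le> fst (2*k+2,Cab) \<longleftrightarrow> rank (j,y) \<le> rank (2*k,Ca) \<or> (j,y) = (2*k,Cb))"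
  by (cases y; simp add: valid_cint_def rank_simps del: rank.simps; arith)

lemma ar6: "k \<ge> 1 \<Longrightarrow> valid_cint (j,y) \<Longrightarrow> (j,y) \<noteq> (1,Cab) \<Longrightarrow> (j,y) \<noteq> (1,Cb2) \<Longrightarrow>
  (fst (j,y) + mindiff (2*k+2,Ca) (j,y) \<le> fst (2*k+2,Ca) \<longleftrightarrow> rank (j,y) \<le> rank (2*k,Ca) \<or> (j,y) = (2*k,Cb))"
  by (cases y; simp add: valid_cint_def rank_simps del: rank.simps; arith)

lemma ar7: "k \<ge> 1 \<Longrightarrow> valid_cint (j,y) \<Longrightarrow> (j,y) \<noteq> (1,Cab) \<Longrightarrow> (j,y) \<noteq> (1,Cb2) \<Longrightarrow>
  (fst (j,y) + mindiff (2*k+3,Ca2) (j,y) \<le> fst (2*k+3,Ca2) \<longleftrightarrow> rank (j,y) \<le> rank (2*k,Ca) \<or> (j,y) = (2*k,Cb))"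
  by (cases y; simp add: valid_cint_def rank_simps del: rank.simps; arith)

lemma ar8: "k \<ge> 1 \<Longrightarrow> valid_cint (j,y) \<Longrightarrow> (j,y) \<noteq> (1,Cab) \<Longrightarrow> (j,y) \<noteq> (1,Cb2) \<Longrightarrow>
  (fst (j,y) + mindiff (2*k+2,Cb) (j,y) \<le> fst (2*k+2,Cb) \<longleftrightarrow> rank (j,y) \<le> rank (2*k+1,Ca))"
  by (cases y; simp add: valid_cint_def rank_simps del: rank.simps; arith)

lemma ar9: "k \<ge> 1 \<Longrightarrow> valid_cint (j,y) \<Longrightarrow> (j,y) \<noteq> (1,Cab) \<Longrightarrow> (j,y) \<noteq> (1,Cb2) \<Longrightarrow>
  (fst (j,y) + mindiff (2*k,Cb) (j,y) \<le> fst (2*k,Cb) \<longleftrightarrow> rank (j,y) \<le> rank (2*k-1,Ca))"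
  by (cases y; simp add: valid_cint_def rank_simps del: rank.simps; arith)




theorem lemma3p2:
  fixes k :: nat
  assumes "k \<ge> 1"
  shows
   "G (2*k+1, Cab) = G (2*k, Cb) + vara * varb * varq ^ (2*k+1) * G (2*k-1, Ca) \<and>
    G (2*k+1, Ca) = G (2*k+1, Cab) + vara * varq ^ (2*k+1) * G (2*k, Cab) \<and>
    G (2*k+1, Cb2) = G (2*k+1, Ca) + varb ^ 2 * varq ^ (2*k+1) * G (2*k-1, Ca) \<and>
    G (2*k+1, Cb) = G (2*k+1, Cb2) + varb * varq ^ (2*k+1) * G (2*k, Ca) \<and>
    G (2*k+2, Cab) = G (2*k+1, Cb) + vara * varb * varq ^ (2*k+2) * G (2*k, Ca)
                     + vara * varb ^ 2 * varq ^ (4*k+2) * G (2*k-1, Ca) \<and>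
    G (2*k+2, Ca) = G (2*k+2, Cab) + vara * varq ^ (2*k+2) * G (2*k, Ca)
                     + vara * varb * varq ^ (4*k+2) * G (2*k-1, Ca) \<and>
    G (2*k+3, Ca2) = G (2*k+2, Ca) + vara ^ 2 * varq ^ (2*k+3) * G (2*k, Ca)
                     + vara ^ 2 * varb * varq ^ (4*k+3) * G (2*k-1, Ca) \<and>
    G (2*k+2, Cb) = G (2*k+3, Ca2) + varb * varq ^ (2*k+2) * G (2*k+1, Ca)"
proof -
  note ass = assms
  have T1: "GF (TT (2*k+1,Cab)) = G (2*k-1,Ca)"
    apply (rule tail1)
    subgoal for h using ar1[OF ass, of "fst h" "snd h"] by simp
    using ass by (auto simp: valid_cint_def)
  have T2: "GF (TT (2*k+1,Ca)) = G (2*k,Cab)"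
    apply (rule tail1)
    subgoal for h using ar2[OF ass, of "fst h" "snd h"] by simp
    using ass by (auto simp: valid_cint_def)
  have T3: "GF (TT (2*k+1,Cb2)) = G (2*k-1,Ca)"
    apply (rule tail1)
    subgoal for h using ar3[OF ass, of "fst h" "snd h"] by simp
    using ass by (auto simp: valid_cint_def)
  have T4: "GF (TT (2*k+1,Cb)) = G (2*k,Ca)"
    apply (rule tail1)
    subgoal for h using ar4[OF ass, of "fst h" "snd h"] by simp
    using ass by (auto simp: valid_cint_def)
  have T8: "GF (TT (2*k+2,Cb)) = G (2*k+1,Ca)"
    apply (rule tail1)
    subgoal for h using ar8[OF ass, of "fst h" "snd h"] by simp
    using ass by (auto simp: valid_cint_def)
  have T9: "GF (TT (2*k,Cb)) = G (2*k-1,Ca)"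
    apply (rule tail1)
    subgoal for h using ar9[OF ass, of "fst h" "snd h"] by simp
    using ass by (auto simp: valid_cint_def)
  have T5: "GF (TT (2*k+2,Cab)) = G (2*k,Ca) + vara^0 * varb^1 * varq^(fst (2*k,Cb)) * GF (TT (2*k,Cb))"
    apply (rule tail2)
    subgoal for h using ar5[OF ass, of "fst h" "snd h"] by simp
    using ass by (auto simp: valid_cint_def weight_u_def weight_v_def wuc_def wvc_def rank_simps simp del: rank.simps)
  have T6: "GF (TT (2*k+2,Ca)) = G (2*k,Ca) + vara^0 * varb^1 * varq^(fst (2*k,Cb)) * GF (TT (2*k,Cb))"
    apply (rule tail2)
    subgoal for h using ar6[OF ass, of "fst h" "snd h"] by simp
    using ass by (auto simp: valid_cint_def weight_u_def weight_v_def wuc_def wvc_def rank_simps simp del: rank.simps)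
  have T7: "GF (TT (2*k+3,Ca2)) = G (2*k,Ca) + vara^0 * varb^1 * varq^(fst (2*k,Cb)) * GF (TT (2*k,Cb))"
    apply (rule tail2)
    subgoal for h using ar7[OF ass, of "fst h" "snd h"] by simp
    using ass by (auto simp: valid_cint_def weight_u_def weight_v_def wuc_def wvc_def rank_simps simp del: rank.simps)
  have D1: "G (2*k+1,Cab) = G (2*k,Cb) + vara^1 * varb^1 * varq^(fst (2*k+1,Cab)) * GF (TT (2*k+1,Cab))"
    by (rule decomp) (use ass in \<open>auto simp: valid_cint_def weight_u_def weight_v_def wuc_def wvc_def rank_simps simp del: rank.simps\<close>)
  have D2: "G (2*k+1,Ca) = G (2*k+1,Cab) + vara^1 * varb^0 * varq^(fst (2*k+1,Ca)) * GF (TT (2*k+1,Ca))"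
    by (rule decomp) (use ass in \<open>auto simp: valid_cint_def weight_u_def weight_v_def wuc_def wvc_def rank_simps simp del: rank.simps\<close>)
  have D3: "G (2*k+1,Cb2) = G (2*k+1,Ca) + vara^0 * varb^2 * varq^(fst (2*k+1,Cb2)) * GF (TT (2*k+1,Cb2))"
    by (rule decomp) (use ass in \<open>auto simp: valid_cint_def weight_u_def weight_v_def wuc_def wvc_def rank_simps simp del: rank.simps\<close>)
  have D4: "G (2*k+1,Cb) = G (2*k+1,Cb2) + vara^0 * varb^1 * varq^(fst (2*k+1,Cb)) * GF (TT (2*k+1,Cb))"
    by (rule decomp) (use ass in \<open>auto simp: valid_cint_def weight_u_def weight_v_def wuc_def wvc_def rank_simps simp del: rank.simps\<close>)
  have D5: "G (2*k+2,Cab) = G (2*k+1,Cb) + vara^1 * varb^1 * varq^(fst (2*k+2,Cab)) * GF (TT (2*k+2,Cab))"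
    by (rule decomp) (use ass in \<open>auto simp: valid_cint_def weight_u_def weight_v_def wuc_def wvc_def rank_simps simp del: rank.simps\<close>)
  have D6: "G (2*k+2,Ca) = G (2*k+2,Cab) + vara^1 * varb^0 * varq^(fst (2*k+2,Ca)) * GF (TT (2*k+2,Ca))"
    by (rule decomp) (use ass in \<open>auto simp: valid_cint_def weight_u_def weight_v_def wuc_def wvc_def rank_simps simp del: rank.simps\<close>)
  have D7: "G (2*k+3,Ca2) = G (2*k+2,Ca) + vara^2 * varb^0 * varq^(fst (2*k+3,Ca2)) * GF (TT (2*k+3,Ca2))"
    by (rule decomp) (use ass in \<open>auto simp: valid_cint_def weight_u_def weight_v_def wuc_def wvc_def rank_simps simp del: rank.simps\<close>)
  have D8: "G (2*k+2,Cb) = G (2*k+3,Ca2) + vara^0 * varb^1 * varq^(fst (2*k+2,Cb)) * GF (TT (2*k+2,Cb))"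
    by (rule decomp) (use ass in \<open>auto simp: valid_cint_def weight_u_def weight_v_def wuc_def wvc_def rank_simps simp del: rank.simps\<close>)
  have q2: "varq^(4*k+2) = varq^(2*k+2)*varq^(2*k)"
  proof -
    have "4*k+2 = (2*k+2) + 2*k" by simp
    then show ?thesis by (simp only: power_add)
  qed
  have q3: "varq^(4*k+3) = varq^(2*k+3)*varq^(2*k)"
  proof -
    have "4*k+3 = (2*k+3) + 2*k" by simp
    then show ?thesis by (simp only: power_add)
  qed
  have I1: "G (2*k+1, Cab) = G (2*k, Cb) + vara * varb * varq ^ (2*k+1) * G (2*k-1, Ca)"
    using D1 T1 by simp
  have I2: "G (2*k+1, Ca) = G (2*k+1, Cab) + vara * varq ^ (2*k+1) * G (2*k, Cab)"
    using D2 T2 by simp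
  have I3: "G (2*k+1, Cb2) = G (2*k+1, Ca) + varb ^ 2 * varq ^ (2*k+1) * G (2*k-1, Ca)"
    using D3 T3 by simp
  have I4: "G (2*k+1, Cb) = G (2*k+1, Cb2) + varb * varq ^ (2*k+1) * G (2*k, Ca)"
    using D4 T4 by simp
  have I5: "G (2*k+2, Cab) = G (2*k+1, Cb) + vara * varb * varq ^ (2*k+2) * G (2*k, Ca)
                     + vara * varb ^ 2 * varq ^ (4*k+2) * G (2*k-1, Ca)"
    unfolding D5 T5 T9 q2 by (simp add: algebra_simps power2_eq_square)
  have I6: "G (2*k+2, Ca) = G (2*k+2, Cab) + vara * varq ^ (2*k+2) * G (2*k, Ca)
                     + vara * varb * varq ^ (4*k+2) * G (2*k-1, Ca)"
    unfolding D6 T6 T9 q2 by (simp add: algebra_simps power2_eq_square)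
  have I7: "G (2*k+3, Ca2) = G (2*k+2, Ca) + vara ^ 2 * varq ^ (2*k+3) * G (2*k, Ca)
                     + vara ^ 2 * varb * varq ^ (4*k+3) * G (2*k-1, Ca)"
    unfolding D7 T7 T9 q3 by (simp add: algebra_simps power2_eq_square)
  have I8: "G (2*k+2, Cb) = G (2*k+3, Ca2) + varb * varq ^ (2*k+2) * G (2*k+1, Ca)"
    using D8 T8 by simp
  show ?thesis using I1 I2 I3 I4 I5 I6 I7 I8 by blast
qed

end
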